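(* Let $A$ be an alternative algebra over a field $F$ with unit element $1$, and let $d$ be a derivation with invertible values of $A$. If $x\in A$ satisfies $d(x)=0$, then either $x=0$ or $x$ is invertible.
   Context: An algebra $A$ is alternative if $(x,x,y)=0$ and $(x,y,y)=0$ for all $x,y\in A$, where $(x,y,z)=(xy)z-x(yz)$ is the associator. An element $a$ of a unital alternative algebra is invertible if there is $b$ with $ab=ba=1$; $U$ denotes the set of invertible elements of $A$. A derivation with invertible values of $A$ is a nonzero derivation $d$ of $A$ such that for every $x\in A$ either $d(x)\in U$ or $d(x)=0$. *)

theory Defs
  imports Main "HOL.Vector_Spaces"
begin

definition algebra_over :: "('k::field \<Rightarrow> 'a::ab_group_add \<Rightarrow> 'a) \<Rightarrow> ('a \<Rightarrow> 'a \<Rightarrow> 'a) \<Rightarrow> bool" where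
  "algebra_over sc mul \<longleftrightarrow>
     vector_space sc \<and>
     (\<forall>x y z. mul (x + y) z = mul x z + mul y z) \<and>
     (\<forall>x y z. mul x (y + z) = mul x y + mul x z) \<and>
     (\<forall>c x y. mul (sc c x) y = sc c (mul x y)) \<and>
     (\<forall>c x y. mul x (sc c y) = sc c (mul x y))"

definition associator :: "('a \<Rightarrow> 'a \<Rightarrow> 'a) \<Rightarrow> 'a::ab_group_add \<Rightarrow> 'a \<Rightarrow> 'a \<Rightarrow> 'a" where
  "associator mul x y z = mul (mul x y) z - mul x (mul y z)"

definition alternative_algebra :: "('k::field \<Rightarrow> 'a::ab_group_add \<Rightarrow> 'a) \<Rightarrow> ('a \<Rightarrow> 'a \<Rightarrow> 'a) \<Rightarrow> bool" where
  "alternative_algebra sc mul \<longleftrightarrow> algebra_over sc mul \<and>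
     (\<forall>x y. associator mul x x y = 0) \<and> (\<forall>x y. associator mul x y y = 0)"

definition is_unit_elem :: "('a \<Rightarrow> 'a \<Rightarrow> 'a) \<Rightarrow> 'a \<Rightarrow> bool" where
  "is_unit_elem mul e \<longleftrightarrow> (\<forall>x. mul e x = x \<and> mul x e = x)"

definition invertible_elem :: "('a \<Rightarrow> 'a \<Rightarrow> 'a) \<Rightarrow> 'a \<Rightarrow> 'a \<Rightarrow> bool" where
  "invertible_elem mul e a \<longleftrightarrow> (\<exists>b. mul a b = e \<and> mul b a = e)"

definition derivation :: "('k::field \<Rightarrow> 'a::ab_group_add \<Rightarrow> 'a) \<Rightarrow> ('a \<Rightarrow> 'a \<Rightarrow> 'a) \<Rightarrow> ('a \<Rightarrow> 'a) \<Rightarrow> bool" where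
  "derivation sc mul d \<longleftrightarrow>
     (\<forall>x y. d (x + y) = d x + d y) \<and> (\<forall>c x. d (sc c x) = sc c (d x)) \<and>
     (\<forall>x y. d (mul x y) = mul (d x) y + mul x (d y))"

definition derivation_inv_values :: "('k::field \<Rightarrow> 'a::ab_group_add \<Rightarrow> 'a) \<Rightarrow> ('a \<Rightarrow> 'a \<Rightarrow> 'a) \<Rightarrow> 'a \<Rightarrow> ('a \<Rightarrow> 'a) \<Rightarrow> bool" where
  "derivation_inv_values sc mul e d \<longleftrightarrow> derivation sc mul d \<and> (\<exists>x. d x \<noteq> 0) \<and>
     (\<forall>x. invertible_elem mul e (d x) \<or> d x = 0)"

end

theory Submission
  imports Defs
begin

locale altm =
  fixes mul :: "'a::ab_group_add \<Rightarrow> 'a \<Rightarrow> 'a"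
  assumes addL: "\<And>x y z. mul (x + y) z = mul x z + mul y z"
    and addR: "\<And>x y z. mul x (y + z) = mul x y + mul x z"
    and alt1: "\<And>x y. associator mul x x y = 0"
    and alt2: "\<And>x y. associator mul x y y = 0"
begin

lemma zeroL[simp]: "mul 0 y = 0"
proof -
  have "mul 0 y + mul 0 y = mul 0 y + 0" using addL[of 0 0 y] by (metis add.right_neutral add_0)
  then show ?thesis by (rule add_left_imp_eq)
qed
lemma zeroR[simp]: "mul y 0 = 0"
proof -
  have "mul y 0 + mul y 0 = mul y 0 + 0" using addR[of y 0 0] by (metis add.right_neutral add_0)
  then show ?thesis by (rule add_left_imp_eq)
qed
lemma minusL: "mul (- x) y = - mul x y"
proof -
  have "mul x y + mul (- x) y = 0" using addL[of x "- x" y] by simp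
  then show ?thesis by (metis minus_unique)
qed
lemma minusR: "mul y (- x) = - mul y x"
proof -
  have "mul y x + mul y (- x) = 0" using addR[of y x "- x"] by simp
  then show ?thesis by (metis minus_unique)
qed
lemma diffL: "mul (x - z) y = mul x y - mul z y"
  by (metis addL minusL diff_conv_add_uminus)
lemma diffR: "mul y (x - z) = mul y x - mul y z"
  by (metis addR minusR diff_conv_add_uminus)

lemmas dist = addL addR minusL minusR diffL diffR

abbreviation A where "A \<equiv> associator mul"

lemma teich: "A (mul a b) c d - A a (mul b c) d + A a b (mul c d) = mul a (A b c d) + mul (A a b c) d"
  by (simp add: associator_def dist algebra_simps)

lemma skew12: "A x y z = - A y x z"
proof -
  have "A (x+y) (x+y) z = 0" by (rule alt1)
  then have "A x x z + A x y z + A y x z + A y y z = 0"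
    by (simp add: associator_def dist algebra_simps)
  then show ?thesis using alt1[of x z] alt1[of y z] by (simp add: eq_neg_iff_add_eq_0)
qed

lemma skew23: "A x y z = - A x z y"
proof -
  have "A x (y+z) (y+z) = 0" by (rule alt2)
  then have "A x y y + A x y z + A x z y + A x z z = 0"
    by (simp add: associator_def dist algebra_simps)
  then show ?thesis using alt2[of x y] alt2[of x z] by (simp add: eq_neg_iff_add_eq_0)
qed

lemma flex0: "A x y x = 0"
  using skew23[of x y x] alt1[of x y] by simp

lemma flex: "mul (mul a x) a = mul a (mul x a)"
  using flex0[of a x] by (simp add: associator_def)

lemma leftalt: "mul a (mul a y) = mul (mul a a) y"
  using alt1[of a y] by (simp add: associator_def)

lemma keyK: "A a (mul x a) y = mul a (A a x y)"
proof -
  have t1: "A (mul x a) a y - A x (mul a a) y + A x a (mul a y) = 0"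
    using teich[of x a a y] alt1[of a y] alt2[of x a] by simp
  have t2: "A (mul a a) y x - A a (mul a y) x = mul a (A a y x)"
    using teich[of a a y x] alt1[of a y] alt1[of a "mul y x"] by simp
  have s1: "A a (mul x a) y = - A (mul x a) a y" by (rule skew12)
  have s2: "A x a (mul a y) = - A a x (mul a y)" by (rule skew12)
  have s3: "A a x (mul a y) = - A a (mul a y) x" by (rule skew23)
  have s4: "A x (mul a a) y = - A (mul a a) x y" by (rule skew12)
  have s5: "A (mul a a) y x = - A (mul a a) x y" by (rule skew23)
  have s6: "A a y x = - A a x y" by (rule skew23)
  have "A a (mul x a) y = A x a (mul a y) - A x (mul a a) y"
    using s1 t1 by (simp add: algebra_simps)
  also have "\<dots> = A a (mul a y) x + A (mul a a) x y"
    using s2 s3 s4 by simp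
  also have "\<dots> = mul a (A a x y)"
    using t2 s5 s6 by (simp add: algebra_simps minusR)
  finally show ?thesis .
qed

lemma moufangL: "mul (mul (mul a x) a) y = mul a (mul x (mul a y))"
proof -
  have e: "mul (mul (mul a x) a) y - mul a (mul x (mul a y)) = A (mul a x) a y + A a x (mul a y)"
    by (simp add: associator_def dist algebra_simps)
  have t: "A (mul a x) a y - A a (mul x a) y + A a x (mul a y) = mul a (A x a y)"
    using teich[of a x a y] flex0[of a x] by simp
  have "A (mul a x) a y + A a x (mul a y) = mul a (A a x y) + mul a (A x a y)"
    using t keyK[of a x y] by (simp add: algebra_simps)
  also have "\<dots> = 0" using skew12[of x a y] by (simp add: minusR)
  finally show ?thesis using e by simp
qed

lemma moufangM: "mul (mul a x) (mul y a) = mul (mul a (mul x y)) a"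
proof -
  have e: "mul (mul a x) (mul y a) - mul (mul a (mul x y)) a = mul (A a x y) a - A (mul a x) y a"
    by (simp add: associator_def dist algebra_simps)
  have t: "A (mul a x) y a - A a (mul x y) a + A a x (mul y a) = mul a (A x y a) + mul (A a x y) a"
    by (rule teich)
  have k: "A a (mul y a) x = mul a (A a y x)" by (rule keyK)
  have s1: "A a x (mul y a) = - A a (mul y a) x" by (rule skew23)
  have s2: "A a y x = A x a y" using skew23[of a y x] skew12[of a x y] by simp
  have s3: "A x y a = - A x a y" by (rule skew23)
  have "A (mul a x) y a = mul (A a x y) a"
    using t k s1 s2 s3 flex0[of a "mul x y"] by (simp add: minusR)
  then show ?thesis using e by simp
qed

lemma inv_cancel:
  assumes unit: "\<And>z. mul e z = z \<and> mul z e = z"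
    and uv: "mul u v = e" and vu: "mul v u = e"
  shows "mul v (mul u y) = y"
proof -
  have m1: "mul (mul u (mul v v)) u = e"
    using moufangM[of u v v] uv vu unit[of e] by simp
  have m2: "\<And>y. y = mul u (mul v (mul v (mul u y)))"
    using moufangL[of u "mul v v"] m1 unit leftalt[of v] by metis
  have m3: "\<And>y. mul u y = mul u (mul v (mul u y))"
    using moufangL[of u v] uv unit by metis
  have "mul v (mul u y) = mul u (mul v (mul v (mul u (mul v (mul u y)))))" using m2 by metis
  also have "\<dots> = mul u (mul v (mul v (mul u y)))" using m3[of y] by simp
  also have "\<dots> = y" using m2 by metis
  finally show ?thesis .
qed

end

lemma altm_flip: "altm mul \<Longrightarrow> altm (\<lambda>a b. mul b a)"
proof -
  assume h: "altm mul"
  have aL: "\<And>x y z. mul z (x + y) = mul z x + mul z y" using h unfolding altm_def by blast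
  have aR: "\<And>x y z. mul (y + z) x = mul y x + mul z x" using h unfolding altm_def by blast
  have b1: "\<And>x y. mul (mul x x) y - mul x (mul x y) = 0" using h unfolding altm_def associator_def by blast
  have b2: "\<And>x y. mul (mul x y) y - mul x (mul y y) = 0" using h unfolding altm_def associator_def by blast
  show ?thesis unfolding altm_def associator_def
  proof (intro conjI allI)
    fix x y :: 'a
    show "mul y (mul x x) - mul (mul y x) x = 0"
      using b2[of y x] by (simp add: eq_iff_diff_eq_0[symmetric])
    show "mul y (mul y x) - mul (mul y y) x = 0"
      using b1[of y x] by (simp add: eq_iff_diff_eq_0[symmetric])
  qed (simp_all add: aL aR)
qed

theorem lemma1p2:
  fixes sc :: "'k::field \<Rightarrow> 'a::ab_group_add \<Rightarrow> 'a"
    and mul :: "'a \<Rightarrow> 'a \<Rightarrow> 'a" and e :: 'a and d :: "'a \<Rightarrow> 'a" and x :: 'a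
  assumes "alternative_algebra sc mul"
    and "is_unit_elem mul e"
    and "derivation_inv_values sc mul e d"
    and "d x = 0"
  shows "x = 0 \<or> invertible_elem mul e x"
proof -
  have alg: "algebra_over sc mul" and a1: "\<And>x y. associator mul x x y = 0"
    and a2: "\<And>x y. associator mul x y y = 0"
    using assms(1) unfolding alternative_algebra_def by blast+
  have am: "altm mul"
    using alg a1 a2 unfolding altm_def algebra_over_def by blast
  interpret M: altm mul by (rule am)
  interpret F: altm "\<lambda>a b. mul b a" by (rule altm_flip[OF am])
  have unit: "\<And>z. mul e z = z \<and> mul z e = z"
    using assms(2) unfolding is_unit_elem_def by blast
  have unit': "\<And>z. mul z e = z \<and> mul e z = z" using unit by blast
  have der: "\<And>a b. d (mul a b) = mul (d a) b + mul a (d b)"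
    using assms(3) unfolding derivation_inv_values_def derivation_def by blast
  have iv: "\<And>z. d z = 0 \<or> (\<exists>b. mul (d z) b = e \<and> mul b (d z) = e)"
    using assms(3) unfolding derivation_inv_values_def invertible_elem_def by blast
  obtain y0 where y0: "d y0 \<noteq> 0"
    using assms(3) unfolding derivation_inv_values_def by blast
  define u where "u = d y0"
  obtain v where uv: "mul u v = e" and vu: "mul v u = e"
    using iv[of y0] y0 u_def by blast
  have dyx: "d (mul y0 x) = mul u x" using der[of y0 x] assms(4) u_def by simp
  have dp: "d (mul x (mul y0 x)) = mul x (mul u x)" using der[of x "mul y0 x"] assms(4) dyx by simp
  show ?thesis
  proof (cases "mul u x = 0")
    case True
    then have "x = 0" using M.inv_cancel[OF unit uv vu, of x] by simp
    then show ?thesis by simp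
  next
    case False
    then obtain s' where ss: "mul (mul u x) s' = e" and ss2: "mul s' (mul u x) = e"
      using iv[of "mul y0 x"] dyx by auto
    show ?thesis
    proof (cases "mul x (mul u x) = 0")
      case True
      have "mul (mul x (mul u x)) s' = x"
        using F.inv_cancel[OF unit' ss2 ss, of x] by simp
      then have "x = 0" using True by simp
      then show ?thesis by simp
    next
      case False
      define p where "p = mul x (mul u x)"
      obtain p' where pp: "mul p p' = e" and pp2: "mul p' p = e"
        using iv[of "mul x (mul y0 x)"] dp False p_def by auto
      have mp: "\<And>z. mul p z = mul x (mul u (mul x z))"
        using M.moufangL[of x u] M.flex[of x u] p_def by simp
      have inj: "\<And>a b. mul x a = mul x b \<Longrightarrow> a = b"
      proof -
        fix a b assume h: "mul x a = mul x b"
        have "a = mul p' (mul p a)" using M.inv_cancel[OF unit pp pp2] by simp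
        also have "\<dots> = mul p' (mul p b)" using mp h by simp
        also have "\<dots> = b" using M.inv_cancel[OF unit pp pp2] by simp
        finally show "a = b" .
      qed
      define z where "z = mul u (mul x (mul p' e))"
      have xz: "mul x z = e"
        using mp[of "mul p' e"] M.inv_cancel[OF unit pp2 pp, of e] z_def by simp
      have "\<And>y. mul x y = mul x (mul z (mul x y))"
        using M.moufangL[of x z] xz unit by metis
      then have "\<And>y. y = mul z (mul x y)" using inj by metis
      then have "mul z x = e" using unit by metis
      then show ?thesis unfolding invertible_elem_def using xz by blast
    qed
  qed
qed

end
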